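(* Let $(X,d)$, $(\Lambda,d_\Lambda)$ be compact metric spaces, $\tau:\Lambda\times X\to X$ continuous and $q:X\to\mathcal P(\Lambda)$ continuous. Assume: (M1) there is $s>0$ such that $\int_\Lambda|f(\tau(\lambda,x))-f(\tau(\lambda,y))|\,dq_x(\lambda)\le s\,d(x,y)$ for all $x,y\in X$ and all $f\in\mathrm{Lip}_1(X)$; (H2) there is $r\ge0$ with $d(\tau(\lambda_1,x),\tau(\lambda_2,x))\le r\,d_\Lambda(\lambda_1,\lambda_2)$ for all $\lambda_1,\lambda_2\in\Lambda$, $x\in X$; (H3) there is $t\ge0$ with $d_{MK}(q_x,q_y)\le t\,d(x,y)$ for all $x,y\in X$; and suppose $s+rt<1$. Then there exists a unique probability $\mu_{\mathcal R}\in\mathcal P(X)$ with $T_q(\mu_{\mathcal R})=\mu_{\mathcal R}$, and for every $\mu_0\in\mathcal P(X)$, $T_q^k(\mu_0)\to\mu_{\mathcal R}$ exponentially fast in the Monge–Kantorovich distance.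
   Context: $\mathcal{P}(Y)$ is the set of Borel probability measures on a compact metric space $Y$, with $d_{MK}(\mu,\nu)=\sup_{f\in \mathrm{Lip}_1(Y)}\{\int f\,d\mu-\int f\,d\nu\}$, where $\mathrm{Lip}_1(Y)$ is the set of real $1$-Lipschitz functions on $Y$. The Markov operator $T_q$ on $\mathcal P(X)$ is defined by $\int_X f\,dT_q(\mu)=\int_X\int_\Lambda f(\tau(\lambda,x))\,dq_x(\lambda)\,d\mu(x)$ for $f\in C(X)$; $T_q^k$ is its $k$-th iterate. *)

theory Defs
  imports "HOL-Analysis.Analysis" "HOL-Probability.Probability"
begin

definition Prob :: "'a::metric_space measure set" where
  "Prob = {M. prob_space M \<and> sets M = sets borel}"

definition dMK :: "'a::metric_space measure \<Rightarrow> 'a measure \<Rightarrow> real" where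
  "dMK \<mu> \<nu> = (SUP f \<in> {f :: 'a \<Rightarrow> real. 1-lipschitz_on UNIV f}.
                 (\<integral>x. f x \<partial>\<mu>) - (\<integral>x. f x \<partial>\<nu>))"

text \<open>Markov operator: the Borel probability measure determined (Riesz) by
  its integrals against continuous functions.\<close>
definition Tq :: "('a::metric_space \<Rightarrow> 'b::metric_space measure) \<Rightarrow> ('b \<Rightarrow> 'a \<Rightarrow> 'a)
                  \<Rightarrow> 'a measure \<Rightarrow> 'a measure" where
  "Tq q \<tau> \<mu> = (THE \<nu>. \<nu> \<in> Prob \<and>
      (\<forall>f :: 'a \<Rightarrow> real. continuous_on UNIV f \<longrightarrow>
         (\<integral>x. f x \<partial>\<nu>) = (\<integral>x. (\<integral>l. f (\<tau> l x) \<partial>(q x)) \<partial>\<mu>)))"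

end

theory Submission
  imports Defs
begin


lemma cont_bounded:
  fixes f :: "'a::metric_space \<Rightarrow> real"
  assumes "compact (UNIV :: 'a set)" "continuous_on UNIV f"
  shows "\<exists>B>0. \<forall>x. \<bar>f x\<bar> \<le> B"
proof -
  have "bounded (f ` UNIV)" using compact_continuous_image[OF assms(2,1)] by (rule compact_imp_bounded)
  then obtain a where "\<forall>y\<in>f ` UNIV. norm y \<le> a" unfolding bounded_iff by blast
  then have "\<forall>x. \<bar>f x\<bar> \<le> max a 1"
    by (metis (full_types) UNIV_I image_eqI le_max_iff_disj real_norm_def)
  then show ?thesis by (intro exI[of _ "max a 1"]) auto
qed

lemma cont_measurable:
  fixes f :: "'a::metric_space \<Rightarrow> real"
  assumes "sets M = sets borel" "continuous_on UNIV f"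
  shows "f \<in> borel_measurable M"
  using borel_measurable_continuous_onI[OF assms(2)] measurable_cong_sets[OF assms(1) refl] by blast

lemma cont_integrable:
  fixes f :: "'a::metric_space \<Rightarrow> real"
  assumes "compact (UNIV :: 'a set)" "prob_space M" "sets M = sets borel" "continuous_on UNIV f"
  shows "integrable M f"
proof -
  interpret prob_space M by fact
  obtain B where "\<forall>x. \<bar>f x\<bar> \<le> B" using cont_bounded[OF assms(1,4)] by blast
  then show ?thesis
    by (intro integrable_const_bound[where B=B] cont_measurable[OF assms(3,4)]) auto
qed

lemma clamp_sum: "(0::real) \<le> t \<Longrightarrow> (\<Sum>i<m. min 1 (max 0 (t - real i))) = min t (real m)"
  by (induction m) (auto simp: min_def max_def)

context
  fixes L :: "('a::metric_space \<Rightarrow> real) \<Rightarrow> real"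
  assumes cpt: "compact (UNIV :: 'a set)"
    and Ladd: "\<And>f g. continuous_on UNIV f \<Longrightarrow> continuous_on UNIV g \<Longrightarrow> L (\<lambda>x. f x + g x) = L f + L g"
    and Lscale: "\<And>f c. continuous_on UNIV f \<Longrightarrow> L (\<lambda>x. c * f x) = c * L f"
    and Lmono: "\<And>f g. continuous_on UNIV f \<Longrightarrow> continuous_on UNIV g \<Longrightarrow> (\<And>x. f x \<le> g x) \<Longrightarrow> L f \<le> L g"
    and Lone: "L (\<lambda>x. 1) = 1"
begin

lemma Lconst: "L (\<lambda>x. c) = c"
  using Lscale[of "\<lambda>x. 1" c] Lone by simp

lemma Lnonneg: "continuous_on UNIV f \<Longrightarrow> (\<And>x. 0 \<le> f x) \<Longrightarrow> 0 \<le> L f"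
  using Lmono[of "\<lambda>x. 0" f] Lconst[of 0] by auto

lemma Lsum: assumes "finite I" shows "(\<And>i. i \<in> I \<Longrightarrow> continuous_on UNIV (g i)) \<Longrightarrow>
   L (\<lambda>x. \<Sum>i\<in>I. g i x) = (\<Sum>i\<in>I. L (g i))"
  using assms
proof (induction I rule: finite_induct)
  case empty
  then show ?case using Lconst[of 0] by simp
next
  case (insert a I)
  have "L (\<lambda>x. \<Sum>i\<in>insert a I. g i x) = L (\<lambda>x. g a x + (\<Sum>i\<in>I. g i x))"
    using insert by simp
  also have "\<dots> = L (g a) + L (\<lambda>x. \<Sum>i\<in>I. g i x)"
    using insert by (intro Ladd) (auto intro!: continuous_intros)
  finally show ?case using insert by simp
qed

definition prec :: "('a \<Rightarrow> real) \<Rightarrow> 'a set \<Rightarrow> bool" where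
  "prec f U \<longleftrightarrow> continuous_on UNIV f \<and> (\<forall>x. 0 \<le> f x \<and> f x \<le> 1) \<and>
     (\<exists>K. closed K \<and> K \<subseteq> U \<and> (\<forall>x. x \<notin> K \<longrightarrow> f x = 0))"

definition rho :: "'a set \<Rightarrow> ennreal" where
  "rho U = (SUP f\<in>{f. prec f U}. ennreal (L f))"

definition om :: "'a set \<Rightarrow> ennreal" where
  "om A = (INF U\<in>{U. open U \<and> A \<subseteq> U}. rho U)"

lemma prec_le_rho: "prec f U \<Longrightarrow> ennreal (L f) \<le> rho U"
  unfolding rho_def by (rule SUP_upper) auto

lemma rho_mono: "U \<subseteq> V \<Longrightarrow> rho U \<le> rho V"
  unfolding rho_def prec_def by (rule SUP_subset_mono) blast+

lemma rho_le1: "rho U \<le> 1"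
  unfolding rho_def
proof (rule SUP_least)
  fix f assume "f \<in> {f. prec f U}"
  then have "L f \<le> L (\<lambda>x. 1)" unfolding prec_def by (intro Lmono) auto
  then show "ennreal (L f) \<le> 1" using Lone by simp
qed

lemma rho_empty: "rho {} = 0"
proof -
  have "rho {} \<le> 0" unfolding rho_def
  proof (rule SUP_least)
    fix f assume "f \<in> {f. prec f {}}"
    then have "f = (\<lambda>x. 0)" unfolding prec_def by auto
    then show "ennreal (L f) \<le> 0" using Lconst[of 0] by simp
  qed
  then show ?thesis by simp
qed

lemma rho_UNIV: "rho UNIV = 1"
proof (rule antisym[OF rho_le1])
  have "prec (\<lambda>x. 1) UNIV" unfolding prec_def by auto
  then show "1 \<le> rho UNIV" using prec_le_rho Lone by fastforce
qed

lemma closed_compact: "closed (K::'a set) \<Longrightarrow> compact K"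
  using compact_Int_closed[OF cpt, of K] by simp

lemma rho_Un:
  assumes U: "open U" and V: "open V"
  shows "rho (U \<union> V) \<le> rho U + rho V"
  unfolding rho_def[of "U \<union> V"]
proof (rule SUP_least)
  fix f assume "f \<in> {f. prec f (U \<union> V)}"
  then have fc: "continuous_on UNIV f" and f01: "\<And>x. 0 \<le> f x \<and> f x \<le> 1"
    and "\<exists>K. closed K \<and> K \<subseteq> U \<union> V \<and> (\<forall>x. x \<notin> K \<longrightarrow> f x = 0)"
    unfolding prec_def by auto
  then obtain K where K: "closed K" "K \<subseteq> U \<union> V" "\<And>x. x \<notin> K \<Longrightarrow> f x = 0" by blast
  define A where "A = K - V"
  have Acl: "closed A" unfolding A_def using K(1) V by (rule closed_Diff)
  have AU: "A \<subseteq> U" using K(2) unfolding A_def by auto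
  have r1: "rho U \<le> rho U + rho V" "rho V \<le> rho U + rho V"
    by (simp_all add: add_increasing add_increasing2)
  show "ennreal (L f) \<le> rho U + rho V"
  proof (cases "A = {} \<or> U = UNIV")
    case True
    then have "prec f U \<or> prec f V"
    proof
      assume "A = {}"
      then have "K \<subseteq> V" unfolding A_def by auto
      then show ?thesis unfolding prec_def using fc f01 K by blast
    next
      assume "U = UNIV"
      then show ?thesis unfolding prec_def using fc f01 K by blast
    qed
    then show ?thesis using prec_le_rho r1 by (meson order_trans)
  next
    case False
    then have Ane: "A \<noteq> {}" and Une: "- U \<noteq> {}" by auto
    define a where "a x = infdist x A" for x
    define b where "b x = infdist x (- U)" for x
    have a0: "a x \<ge> 0" "b x \<ge> 0" for x unfolding a_def b_def by (simp_all add: infdist_nonneg)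
    have aA: "a x = 0 \<Longrightarrow> x \<in> A" for x
      using in_closure_iff_infdist_zero[OF Ane, of x] Acl unfolding a_def by simp
    have bU: "b x = 0 \<Longrightarrow> x \<notin> U" for x
      using in_closure_iff_infdist_zero[OF Une, of x] U unfolding b_def
      by (simp add: closed_Compl closure_closed)
    have bU': "x \<notin> U \<Longrightarrow> b x = 0" for x unfolding b_def by simp
    have aA': "x \<in> A \<Longrightarrow> a x = 0" for x unfolding a_def by simp
    have pos: "a x + b x > 0" for x
    proof -
      have "a x + b x \<noteq> 0"
      proof
        assume "a x + b x = 0"
        then have "a x = 0" "b x = 0" using a0[of x] by linarith+
        then show False using aA bU AU by blast
      qed
      then show ?thesis using a0[of x] by linarith
    qed
    have ac: "continuous_on UNIV a" unfolding a_def by (intro continuous_intros)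
    have bc: "continuous_on UNIV b" unfolding b_def by (intro continuous_intros)
    define h where "h x = min 1 (max 0 (2 - 3 * a x / (a x + b x)))" for x
    have nz: "a x + b x \<noteq> 0" for x using pos[of x] by simp
    have hc: "continuous_on UNIV h" unfolding h_def
      by (intro continuous_intros ac bc) (use nz in auto)
    have h01: "0 \<le> h x" "h x \<le> 1" for x unfolding h_def by auto
    define f1 where "f1 x = f x * h x" for x
    define f2 where "f2 x = f x * (1 - h x)" for x
    have f1c: "continuous_on UNIV f1" unfolding f1_def by (intro continuous_intros fc hc)
    have f2c: "continuous_on UNIV f2" unfolding f2_def by (intro continuous_intros fc hc)
    have f12: "f = (\<lambda>x. f1 x + f2 x)" unfolding f1_def f2_def by (auto simp: algebra_simps)
    have p1: "prec f1 U"
      unfolding prec_def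
    proof (intro conjI allI exI impI)
      show "continuous_on UNIV f1" by (rule f1c)
      fix x show "0 \<le> f1 x" "f1 x \<le> 1" unfolding f1_def using f01[of x] h01[of x]
        by (auto simp: mult_le_one)
    next
      show "closed {x. 3 * a x \<le> 2 * (a x + b x)}"
        by (intro closed_Collect_le continuous_intros ac bc)
      show "{x. 3 * a x \<le> 2 * (a x + b x)} \<subseteq> U"
      proof
        fix x assume x: "x \<in> {x. 3 * a x \<le> 2 * (a x + b x)}"
        show "x \<in> U"
        proof (rule ccontr)
          assume "x \<notin> U"
          then have "b x = 0" by (rule bU')
          then have "a x = 0" using x a0[of x] by auto
          then show False using aA AU \<open>x \<notin> U\<close> by blast
        qed
      qed
      fix x assume "x \<notin> {x. 3 * a x \<le> 2 * (a x + b x)}"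
      then have "3 * a x > 2 * (a x + b x)" by auto
      then have "3 * a x / (a x + b x) > 2" using pos[of x] by (simp add: pos_less_divide_eq)
      then have "h x = 0" unfolding h_def by auto
      then show "f1 x = 0" unfolding f1_def by simp
    qed
    have p2: "prec f2 V"
      unfolding prec_def
    proof (intro conjI allI exI impI)
      show "continuous_on UNIV f2" by (rule f2c)
      fix x show "0 \<le> f2 x" "f2 x \<le> 1" unfolding f2_def using f01[of x] h01[of x]
        by (auto simp: mult_le_one)
    next
      show "closed (K \<inter> {x. a x + b x \<le> 3 * a x})"
        by (intro closed_Int K(1) closed_Collect_le continuous_intros ac bc)
      show "K \<inter> {x. a x + b x \<le> 3 * a x} \<subseteq> V"
      proof
        fix x assume x: "x \<in> K \<inter> {x. a x + b x \<le> 3 * a x}"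
        show "x \<in> V"
        proof (rule ccontr)
          assume "x \<notin> V"
          then have "x \<in> A" using x unfolding A_def by auto
          then have "a x = 0" by (rule aA')
          then show False using x pos[of x] by auto
        qed
      qed
      fix x assume x: "x \<notin> K \<inter> {x. a x + b x \<le> 3 * a x}"
      show "f2 x = 0"
      proof (cases "x \<in> K")
        case False then show ?thesis using K(3) unfolding f2_def by simp
      next
        case True
        then have "3 * a x < a x + b x" using x by auto
        then have "3 * a x / (a x + b x) < 1" using pos[of x] by (simp add: divide_less_eq)
        then have "h x = 1" unfolding h_def by auto
        then show ?thesis unfolding f2_def by simp
      qed
    qed
    have n1: "0 \<le> L f1" using p1 unfolding prec_def by (intro Lnonneg) auto
    have n2: "0 \<le> L f2" using p2 unfolding prec_def by (intro Lnonneg) auto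
    have "L f = L f1 + L f2" by (subst f12) (rule Ladd[OF f1c f2c])
    then have "ennreal (L f) = ennreal (L f1) + ennreal (L f2)" using n1 n2 by (simp add: ennreal_plus)
    also have "\<dots> \<le> rho U + rho V" using prec_le_rho[OF p1] prec_le_rho[OF p2] by (rule add_mono)
    finally show ?thesis .
  qed
qed

lemma rho_UN_fin: assumes U: "\<And>i. open (U i)" shows "rho (\<Union>i<(n::nat). U i) \<le> (\<Sum>i<n. rho (U i))"
proof (induction n)
  case 0
  then show ?case by (simp add: rho_empty)
next
  case (Suc n)
  have "(\<Union>i<Suc n. U i) = U n \<union> (\<Union>i<n. U i)" by (auto simp: lessThan_Suc)
  then have "rho (\<Union>i<Suc n. U i) \<le> rho (U n) + rho (\<Union>i<n. U i)"
    using U by (simp add: rho_Un open_UN)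
  also have "\<dots> \<le> rho (U n) + (\<Sum>i<n. rho (U i))" using Suc by (simp add: add_left_mono)
  finally show ?case by (simp add: add.commute)
qed

lemma rho_UN:
  assumes U: "\<And>i. open (U i)"
  shows "rho (\<Union>i. U i) \<le> (\<Sum>i. rho (U i))"
  unfolding rho_def[of "\<Union>i. U i"]
proof (rule SUP_least)
  fix f assume "f \<in> {f. prec f (\<Union>i. U i)}"
  then have fc: "continuous_on UNIV f" and f01: "\<And>x. 0 \<le> f x \<and> f x \<le> 1"
    and "\<exists>K. closed K \<and> K \<subseteq> (\<Union>i. U i) \<and> (\<forall>x. x \<notin> K \<longrightarrow> f x = 0)"
    unfolding prec_def by auto
  then obtain K where K: "closed K" "K \<subseteq> (\<Union>i. U i)" "\<And>x. x \<notin> K \<Longrightarrow> f x = 0" by blast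
  obtain C' where C': "C' \<subseteq> UNIV" "finite C'" "K \<subseteq> (\<Union>c\<in>C'. U c)"
    using compactE_image[OF closed_compact[OF K(1)], of UNIV U] U K(2) by blast
  obtain n where "C' \<subseteq> {..<n}" using finite_nat_bounded[OF C'(2)] by blast
  then have "K \<subseteq> (\<Union>i<n. U i)" using C'(3) by blast
  then have "prec f (\<Union>i<n. U i)" unfolding prec_def using fc f01 K by blast
  then have "ennreal (L f) \<le> rho (\<Union>i<n. U i)" by (rule prec_le_rho)
  also have "\<dots> \<le> (\<Sum>i<n. rho (U i))" using U by (rule rho_UN_fin)
  also have "\<dots> \<le> (\<Sum>i. rho (U i))" by (rule sum_le_suminf) auto
  finally show "ennreal (L f) \<le> (\<Sum>i. rho (U i))" .
qed

lemma om_le_rho: "open U \<Longrightarrow> A \<subseteq> U \<Longrightarrow> om A \<le> rho U"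
  unfolding om_def by (rule INF_lower) auto

lemma om_open: "open U \<Longrightarrow> om U = rho U"
  by (rule antisym[OF om_le_rho]) (auto simp: om_def intro!: INF_greatest rho_mono)

lemma om_mono: "A \<subseteq> B \<Longrightarrow> om A \<le> om B"
  unfolding om_def by (rule INF_superset_mono) auto

lemma om_le1: "om A \<le> 1"
  using om_le_rho[of UNIV A] rho_UNIV by simp

lemma om_empty: "om {} = 0"
  using om_le_rho[of "{}" "{}"] rho_empty by simp

lemma om_UN: "om (\<Union>i. A i) \<le> (\<Sum>i. om (A i))"
proof (rule ennreal_le_epsilon)
  fix e :: real assume e: "0 < e"
  have "\<exists>U. open U \<and> A i \<subseteq> U \<and> rho U < om (A i) + ennreal (e * (1/2)^Suc i)" for i
  proof -
    have ne: "om (A i) \<noteq> \<infinity>" using om_le1[of "A i"] by (auto simp: top_unique)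
    have "0 < ennreal (e * (1/2)^Suc i)" using e by simp
    then have "om (A i) + 0 < om (A i) + ennreal (e * (1/2)^Suc i)"
      using ne by (simp only: ennreal_add_left_cancel_less) simp
    then have "om (A i) < om (A i) + ennreal (e * (1/2)^Suc i)" by simp
    then show ?thesis unfolding om_def[of "A i"] by (simp add: INF_less_iff)
  qed
  then obtain U where U: "\<And>i. open (U i)" "\<And>i. A i \<subseteq> U i"
    "\<And>i. rho (U i) < om (A i) + ennreal (e * (1/2)^Suc i)" by metis
  have "om (\<Union>i. A i) \<le> rho (\<Union>i. U i)"
    using U(1,2) by (intro om_le_rho) (auto intro!: open_UN)
  also have "\<dots> \<le> (\<Sum>i. rho (U i))" using U(1) by (rule rho_UN)
  also have "\<dots> \<le> (\<Sum>i. om (A i) + ennreal (e * (1/2)^Suc i))"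
    using U(3) by (intro suminf_le) (auto intro: less_imp_le)
  also have "\<dots> = (\<Sum>i. om (A i)) + (\<Sum>i. ennreal (e * (1/2)^Suc i))"
    by (rule suminf_add[symmetric]) auto
  also have "(\<Sum>i. ennreal (e * (1/2)^Suc i)) = ennreal (\<Sum>i. e * (1/2)^Suc i)"
    using e by (intro suminf_ennreal2) (auto intro!: summable_mult sums_summable[OF power_half_series])
  also have "(\<Sum>i. e * (1/2::real)^Suc i) = e"
    using sums_mult[OF power_half_series, of e] by (simp add: sums_iff)
  finally show "om (\<Union>i. A i) \<le> (\<Sum>i. om (A i)) + ennreal e" .
qed

lemma om_Un: "om (A \<union> B) \<le> om A + om B"
proof -
  define C where "C i = (if i = 0 then A else if i = 1 then B else {})" for i :: nat
  have "A \<union> B = (\<Union>i. C i)"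
    unfolding C_def by (auto split: if_splits)
  then have "om (A \<union> B) \<le> (\<Sum>i. om (C i))" using om_UN by simp
  also have "(\<Sum>i. om (C i)) = (\<Sum>i\<in>{0,1}. om (C i))"
    by (rule suminf_finite) (auto simp: C_def om_empty)
  also have "\<dots> = om A + om B" by (simp add: C_def)
  finally show ?thesis .
qed

lemma prec_zero: "prec (\<lambda>x. 0) U"
  unfolding prec_def by auto

lemma om_split:
  assumes V: "open V"
  shows "om (A \<inter> V) + om (A - V) \<le> om A"
  unfolding om_def[of A]
proof (rule INF_greatest)
  fix U assume "U \<in> {U. open U \<and> A \<subseteq> U}"
  then have U: "open U" "A \<subseteq> U" by auto
  have "om (A \<inter> V) + om (A - V) \<le> rho (U \<inter> V) + om (A - V)"
    using U V by (intro add_right_mono om_le_rho) auto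
  also have "rho (U \<inter> V) + om (A - V) = (SUP f\<in>{f. prec f (U \<inter> V)}. ennreal (L f) + om (A - V))"
    unfolding rho_def by (rule ennreal_SUP_add_left[symmetric]) (use prec_zero in blast)
  also have "\<dots> \<le> rho U"
  proof (rule SUP_least)
    fix f assume "f \<in> {f. prec f (U \<inter> V)}"
    then have fc: "continuous_on UNIV f" and f01: "\<And>x. 0 \<le> f x \<and> f x \<le> 1"
      and "\<exists>K. closed K \<and> K \<subseteq> U \<inter> V \<and> (\<forall>x. x \<notin> K \<longrightarrow> f x = 0)"
      unfolding prec_def by auto
    then obtain K where K: "closed K" "K \<subseteq> U \<inter> V" "\<And>x. x \<notin> K \<Longrightarrow> f x = 0" by blast
    have "om (A - V) \<le> rho (U - K)"
      using U K by (intro om_le_rho) (auto intro: open_Diff)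
    moreover have "ennreal (L f) + rho (U - K) \<le> rho U"
      unfolding rho_def[of "U - K"]
    proof (subst ennreal_SUP_add_right)
      show "{f. prec f (U - K)} \<noteq> {}" using prec_zero by blast
      show "(SUP g\<in>{f. prec f (U - K)}. ennreal (L f) + ennreal (L g)) \<le> rho U"
      proof (rule SUP_least)
        fix g assume "g \<in> {f. prec f (U - K)}"
        then have gc: "continuous_on UNIV g" and g01: "\<And>x. 0 \<le> g x \<and> g x \<le> 1"
          and "\<exists>K'. closed K' \<and> K' \<subseteq> U - K \<and> (\<forall>x. x \<notin> K' \<longrightarrow> g x = 0)"
          unfolding prec_def by auto
        then obtain Kg where Kg: "closed Kg" "Kg \<subseteq> U - K" "\<And>x. x \<notin> Kg \<Longrightarrow> g x = 0" by blast
        have p: "prec (\<lambda>x. f x + g x) U"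
          unfolding prec_def
        proof (intro conjI allI exI impI)
          show "continuous_on UNIV (\<lambda>x. f x + g x)" by (intro continuous_intros fc gc)
          fix x
          show "0 \<le> f x + g x" using f01[of x] g01[of x] by simp
          show "f x + g x \<le> 1"
          proof (cases "x \<in> K")
            case True
            then have "g x = 0" using Kg by blast
            then show ?thesis using f01[of x] by simp
          next
            case False
            then show ?thesis using K(3) g01[of x] by simp
          qed
        next
          show "closed (K \<union> Kg)" using K Kg by auto
          show "K \<union> Kg \<subseteq> U" using K Kg by auto
          fix x assume "x \<notin> K \<union> Kg" then show "f x + g x = 0" using K Kg by simp
        qed
        have "0 \<le> L f" using fc f01 by (intro Lnonneg) auto
        moreover have "0 \<le> L g" using gc g01 by (intro Lnonneg) auto
        ultimately have "ennreal (L f) + ennreal (L g) = ennreal (L (\<lambda>x. f x + g x))"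
          by (simp add: Ladd[OF fc gc] ennreal_plus)
        also have "\<dots> \<le> rho U" using p by (rule prec_le_rho)
        finally show "ennreal (L f) + ennreal (L g) \<le> rho U" .
      qed
    qed
    ultimately show "ennreal (L f) + om (A - V) \<le> rho U"
      by (meson add_left_mono order_trans)
  qed
  finally show "om (A \<inter> V) + om (A - V) \<le> rho U" .
qed

lemma open_lambda: "open V \<Longrightarrow> V \<in> lambda_system UNIV (Pow UNIV) om"
  unfolding lambda_system_def
proof (intro CollectI conjI ballI)
  fix x :: "'a set" assume V: "open V"
  have e1: "V \<inter> x = x \<inter> V" "(UNIV - V) \<inter> x = x - V" by auto
  have "om x \<le> om (x \<inter> V) + om (x - V)"
    using om_Un[of "x \<inter> V" "x - V"] by (metis Int_Diff_Un)
  then show "om (V \<inter> x) + om ((UNIV - V) \<inter> x) = om x"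
    unfolding e1 using om_split[OF V, of x] by (rule antisym[rotated])
qed simp

lemma oms: "outer_measure_space (Pow UNIV) om"
  unfolding outer_measure_space_def positive_def increasing_def countably_subadditive_def
  by (auto simp: om_empty om_mono om_UN)

definition Mu :: "'a measure" where
  "Mu = measure_of UNIV (sets borel) om"

lemma Mu_facts: "sets Mu = sets borel" "space Mu = UNIV"
  "\<And>A. A \<in> sets borel \<Longrightarrow> emeasure Mu A = om A" "prob_space Mu"
proof -
  have ms: "measure_space UNIV (lambda_system UNIV (Pow UNIV) om) om"
    using sigma_algebra.caratheodory_lemma[OF sigma_algebra_Pow oms] by simp
  then have sa: "sigma_algebra UNIV (lambda_system UNIV (Pow UNIV) om)"
    unfolding measure_space_def by simp
  have sub: "sets borel \<subseteq> lambda_system UNIV (Pow UNIV) om"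
    unfolding sets_borel using open_lambda by (intro sigma_algebra.sigma_sets_subset[OF sa]) auto
  have sab: "sigma_algebra UNIV (sets borel)"
    using sets.sigma_algebra_axioms[of borel] by simp
  have ms2: "measure_space UNIV (sets borel) om"
    by (rule measure_down[OF ms sab sub])
  show s: "sets Mu = sets borel" unfolding Mu_def
    using sets.sets_measure_of_eq[of borel om] by simp
  show sp: "space Mu = UNIV" unfolding Mu_def
    using sets.space_measure_of_eq[of borel om] by simp
  show em: "\<And>A. A \<in> sets borel \<Longrightarrow> emeasure Mu A = om A"
    unfolding Mu_def using ms2 unfolding measure_space_def
    by (intro emeasure_measure_of_sigma) auto
  show "prob_space Mu"
    by (rule prob_spaceI) (simp add: sp em om_open rho_UNIV)
qed

lemma I1:
  assumes K: "closed K" and g: "continuous_on UNIV g" "\<And>x. 0 \<le> g x \<and> g x \<le> 1"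
    "\<And>x. x \<notin> K \<Longrightarrow> g x = 0"
  shows "L g \<le> measure Mu K"
proof -
  interpret P: prob_space Mu by (rule Mu_facts)
  have "ennreal (L g) \<le> om K" unfolding om_def
  proof (rule INF_greatest)
    fix U assume "U \<in> {U. open U \<and> K \<subseteq> U}"
    then have "prec g U" unfolding prec_def using K g by blast
    then show "ennreal (L g) \<le> rho U" by (rule prec_le_rho)
  qed
  also have "om K = emeasure Mu K" using Mu_facts(3)[of K] K by simp
  also have "\<dots> = ennreal (measure Mu K)" by (rule P.emeasure_eq_measure)
  finally show ?thesis by simp
qed

lemma I2:
  assumes K: "closed K" and g: "continuous_on UNIV g" "\<And>x. 0 \<le> g x" "\<And>x. x \<in> K \<Longrightarrow> 1 \<le> g x"
  shows "measure Mu K \<le> L g"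
proof (rule field_le_mult_one_interval)
  fix z :: real assume z: "0 < z" "z < 1"
  interpret P: prob_space Mu by (rule Mu_facts)
  define V where "V = {x. z < g x}"
  have Vo: "open V" unfolding V_def by (intro open_Collect_less continuous_intros g)
  have KV: "K \<subseteq> V" unfolding V_def using g(3) z by force
  have Lg: "0 \<le> L g" using g by (intro Lnonneg) auto
  have "ennreal (measure Mu K) = emeasure Mu K" by (rule P.emeasure_eq_measure[symmetric])
  also have "\<dots> \<le> emeasure Mu V"
    using KV Vo by (intro emeasure_mono) (auto simp: Mu_facts)
  also have "\<dots> = rho V" using Mu_facts(3)[of V] Vo by (simp add: om_open)
  also have "\<dots> \<le> ennreal (L g / z)" unfolding rho_def
  proof (rule SUP_least)
    fix h assume "h \<in> {f. prec f V}"
    then have hc: "continuous_on UNIV h" and h01: "\<And>x. 0 \<le> h x \<and> h x \<le> 1"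
      and "\<exists>K'. closed K' \<and> K' \<subseteq> V \<and> (\<forall>x. x \<notin> K' \<longrightarrow> h x = 0)"
      unfolding prec_def by auto
    then obtain Kh where Kh: "Kh \<subseteq> V" "\<And>x. x \<notin> Kh \<Longrightarrow> h x = 0" by blast
    have "h x \<le> (1/z) * g x" for x
    proof (cases "x \<in> V")
      case True
      then have "1 < g x / z" using z unfolding V_def by (simp add: less_divide_eq)
      then show ?thesis using h01[of x] by simp
    next
      case False
      then have "h x = 0" using Kh by blast
      then show ?thesis using g(2)[of x] z by simp
    qed
    then have "L h \<le> L (\<lambda>x. (1/z) * g x)" by (intro Lmono hc continuous_intros g)
    also have "\<dots> = L g / z" using Lscale[OF g(1), of "1/z"] by simp
    finally show "ennreal (L h) \<le> ennreal (L g / z)" by (simp add: ennreal_leI)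
  qed
  finally have "measure Mu K \<le> L g / z" using Lg z by simp
  then show "z * measure Mu K \<le> L g" using z by (simp add: pos_le_divide_eq mult.commute)
qed


lemma Mu_integrable: "continuous_on UNIV (f::'a \<Rightarrow> real) \<Longrightarrow> integrable Mu f"
  by (rule cont_integrable[OF cpt Mu_facts(4) Mu_facts(1)])

lemma slice:
  assumes fc: "continuous_on UNIV f" and f01: "\<And>x. 0 \<le> f x \<and> f x \<le> 1" and n: "n > 0"
  shows "\<bar>L f - integral\<^sup>L Mu f\<bar> \<le> 1 / real n"
proof -
  interpret P: prob_space Mu by (rule Mu_facts)
  define g where "g i x = min 1 (max 0 (real n * f x - real i))" for i x
  define K where "K i = {x. real i \<le> real n * f x}" for i
  have gc: "continuous_on UNIV (g i)" for i unfolding g_def by (intro continuous_intros fc)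
  have g01: "0 \<le> g i x \<and> g i x \<le> 1" for i x unfolding g_def by auto
  have Kc: "closed (K i)" for i unfolding K_def by (intro closed_Collect_le continuous_intros fc)
  have Kb: "K i \<in> sets Mu" for i using Kc by (simp add: Mu_facts)
  have g1: "x \<in> K (Suc i) \<Longrightarrow> g i x = 1" for i x unfolding K_def g_def by auto
  have g0: "x \<notin> K i \<Longrightarrow> g i x = 0" for i x unfolding K_def g_def by auto
  have sumid: "f = (\<lambda>x. (1 / real n) * (\<Sum>i<n. g i x))"
  proof
    fix x
    have "(\<Sum>i<n. g i x) = min (real n * f x) (real n)"
      unfolding g_def using f01[of x] by (intro clamp_sum) simp
    also have "\<dots> = real n * f x"
    proof -
      have "real n * f x \<le> real n" using f01[of x] by (simp add: mult_left_le)
      then show ?thesis by (simp add: min_def)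
    qed
    finally show "f x = (1 / real n) * (\<Sum>i<n. g i x)" using n by simp
  qed
  have Lf: "L f = (1 / real n) * (\<Sum>i<n. L (g i))"
  proof -
    have c: "continuous_on UNIV (\<lambda>x. \<Sum>i<n. g i x)" by (intro continuous_intros gc)
    have "L f = L (\<lambda>x. (1 / real n) * (\<Sum>i<n. g i x))" by (subst sumid) (rule refl)
    also have "\<dots> = (1 / real n) * L (\<lambda>x. \<Sum>i<n. g i x)" by (rule Lscale[OF c])
    also have "L (\<lambda>x. \<Sum>i<n. g i x) = (\<Sum>i<n. L (g i))" by (rule Lsum) (auto intro: gc)
    finally show ?thesis .
  qed
  have If: "integral\<^sup>L Mu f = (1 / real n) * (\<Sum>i<n. integral\<^sup>L Mu (g i))"
  proof -
    have "integral\<^sup>L Mu f = integral\<^sup>L Mu (\<lambda>x. (1 / real n) * (\<Sum>i<n. g i x))" by (subst sumid) (rule refl)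
    also have "\<dots> = (1 / real n) * integral\<^sup>L Mu (\<lambda>x. \<Sum>i<n. g i x)" by (rule integral_mult_right_zero)
    also have "integral\<^sup>L Mu (\<lambda>x. \<Sum>i<n. g i x) = (\<Sum>i<n. integral\<^sup>L Mu (g i))"
      using Mu_integrable[OF gc] by simp
    finally show ?thesis .
  qed
  have bL: "\<bar>L (g i) - integral\<^sup>L Mu (g i)\<bar> \<le> measure Mu (K i) - measure Mu (K (Suc i))" for i
  proof -
    have a1: "measure Mu (K (Suc i)) \<le> L (g i)" using Kc gc g1 g01 by (intro I2) auto
    have a2: "L (g i) \<le> measure Mu (K i)" using Kc gc g01 g0 by (intro I1) auto
    have ind: "integrable Mu (indicator (K j) :: 'a \<Rightarrow> real)" for j
      by (intro P.integrable_const_bound[where B=1]) (use Kb in auto)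
    have b1: "measure Mu (K (Suc i)) \<le> integral\<^sup>L Mu (g i)"
    proof -
      have "integral\<^sup>L Mu (indicator (K (Suc i))) \<le> integral\<^sup>L Mu (g i)"
      proof (rule integral_mono[OF ind Mu_integrable[OF gc]])
        fix x show "indicator (K (Suc i)) x \<le> g i x"
          using g1[of x i] g01[of i x] by (cases "x \<in> K (Suc i)") auto
      qed
      then show ?thesis by (simp add: Mu_facts)
    qed
    have b2: "integral\<^sup>L Mu (g i) \<le> measure Mu (K i)"
    proof -
      have "integral\<^sup>L Mu (g i) \<le> integral\<^sup>L Mu (indicator (K i))"
      proof (rule integral_mono[OF Mu_integrable[OF gc] ind])
        fix x show "g i x \<le> indicator (K i) x"
          using g0[of x i] g01[of i x] by (cases "x \<in> K i") auto
      qed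
      then show ?thesis by (simp add: Mu_facts)
    qed
    show ?thesis using a1 a2 b1 b2 by linarith
  qed
  have "L f - integral\<^sup>L Mu f = (1 / real n) * (\<Sum>i<n. L (g i) - integral\<^sup>L Mu (g i))"
    unfolding Lf If sum_subtractf by (simp only: right_diff_distrib)
  then have "\<bar>L f - integral\<^sup>L Mu f\<bar> = (1 / real n) * \<bar>\<Sum>i<n. L (g i) - integral\<^sup>L Mu (g i)\<bar>"
    by (simp add: abs_mult)
  also have "\<dots> \<le> (1 / real n) * (\<Sum>i<n. measure Mu (K i) - measure Mu (K (Suc i)))"
  proof (rule mult_left_mono)
    show "\<bar>\<Sum>i<n. L (g i) - integral\<^sup>L Mu (g i)\<bar> \<le> (\<Sum>i<n. measure Mu (K i) - measure Mu (K (Suc i)))"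
      by (rule order_trans[OF sum_abs sum_mono]) (rule bL)
  qed simp
  also have "(\<Sum>i<n. measure Mu (K i) - measure Mu (K (Suc i))) = measure Mu (K 0) - measure Mu (K n)"
    by (rule sum_lessThan_telescope')
  finally have A: "\<bar>L f - integral\<^sup>L Mu f\<bar> \<le> (1 / real n) * (measure Mu (K 0) - measure Mu (K n))" .
  have B: "measure Mu (K 0) - measure Mu (K n) \<le> 1"
    using P.prob_le_1[of "K 0"] measure_nonneg[of Mu "K n"] by linarith
  have "(1 / real n) * (measure Mu (K 0) - measure Mu (K n)) \<le> (1 / real n) * 1"
    using B by (intro mult_left_mono) auto
  then show ?thesis using A by simp
qed


lemma riesz01:
  assumes fc: "continuous_on UNIV f" and f01: "\<And>x. 0 \<le> f x \<and> f x \<le> 1"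
  shows "integral\<^sup>L Mu f = L f"
proof (rule ccontr)
  assume "integral\<^sup>L Mu f \<noteq> L f"
  then have "0 < \<bar>L f - integral\<^sup>L Mu f\<bar>" by simp
  then obtain n where n: "n > 0" "inverse (real n) < \<bar>L f - integral\<^sup>L Mu f\<bar>"
    using ex_inverse_of_nat_less by blast
  then show False using slice[OF fc f01 n(1)] by (simp add: inverse_eq_divide)
qed

lemma riesz_Mu:
  assumes fc: "continuous_on UNIV f"
  shows "integral\<^sup>L Mu f = L f"
proof -
  interpret P: prob_space Mu by (rule Mu_facts)
  obtain B where B: "B > 0" "\<And>x. \<bar>f x\<bar> \<le> B" using cont_bounded[OF cpt fc] by blast
  define c where "c = 1 / (2 * B)"
  have c: "c > 0" unfolding c_def using B by simp
  define g where "g x = c * f x + 1/2" for x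
  have gc: "continuous_on UNIV g" unfolding g_def by (intro continuous_intros fc)
  have g01: "0 \<le> g x \<and> g x \<le> 1" for x
  proof -
    have "c * \<bar>f x\<bar> \<le> c * B" using B c by (intro mult_left_mono) auto
    also have "c * B = 1/2" unfolding c_def using B by simp
    finally have "\<bar>c * f x\<bar> \<le> 1/2" using c by (simp add: abs_mult)
    then show ?thesis unfolding g_def by linarith
  qed
  have "L g = c * L f + 1/2"
    unfolding g_def by (simp add: Ladd continuous_intros fc Lscale Lconst)
  moreover have "integral\<^sup>L Mu g = c * integral\<^sup>L Mu f + 1/2"
    unfolding g_def using Mu_integrable[OF fc] by (simp add: P.prob_space)
  moreover have "integral\<^sup>L Mu g = L g" by (rule riesz01[OF gc g01])
  ultimately show ?thesis using c by simp
qed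

lemma riesz: "\<exists>\<mu>\<in>Prob. \<forall>f. continuous_on UNIV f \<longrightarrow> integral\<^sup>L \<mu> f = L f"
  using riesz_Mu Mu_facts unfolding Prob_def by blast

end



lemma ProbD: "\<mu> \<in> Prob \<Longrightarrow> prob_space \<mu>" "\<mu> \<in> Prob \<Longrightarrow> sets \<mu> = sets borel"
  "\<mu> \<in> Prob \<Longrightarrow> space \<mu> = UNIV"
  unfolding Prob_def by (auto dest: sets_eq_imp_space_eq)

lemma lip_integrable:
  fixes f :: "'c::metric_space \<Rightarrow> real"
  assumes "compact (UNIV :: 'c set)" "\<mu> \<in> Prob" "K-lipschitz_on UNIV f"
  shows "integrable \<mu> f"
  using cont_integrable[OF assms(1) ProbD(1,2)[OF assms(2)] lipschitz_on_continuous_on[OF assms(3)]] .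

lemma diam_bound:
  assumes "compact (UNIV :: 'c::metric_space set)"
  shows "\<exists>D. \<forall>x y::'c. dist x y \<le> D"
  using compact_imp_bounded[OF assms] unfolding bounded_two_points by auto

lemma lip0: "1-lipschitz_on UNIV (\<lambda>x. 0::real)"
  by (rule lipschitz_onI) auto

lemma integral_const_prob: assumes "\<mu> \<in> Prob" shows "integral\<^sup>L \<mu> (\<lambda>x. c) = (c::real)"
proof -
  interpret prob_space \<mu> using ProbD(1)[OF assms] .
  show ?thesis by (simp add: prob_space)
qed

lemma dMK_ge:
  fixes \<mu> \<nu> :: "'c::metric_space measure"
  assumes cpt: "compact (UNIV :: 'c set)" and P: "\<mu> \<in> Prob" "\<nu> \<in> Prob"
    and f: "1-lipschitz_on UNIV f"
  shows "integral\<^sup>L \<mu> f - integral\<^sup>L \<nu> f \<le> dMK \<mu> \<nu>"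
proof -
  interpret M: prob_space \<mu> by (rule ProbD(1)[OF P(1)])
  interpret N: prob_space \<nu> by (rule ProbD(1)[OF P(2)])
  show ?thesis unfolding dMK_def
proof (rule cSUP_upper)
  show "f \<in> {f. 1-lipschitz_on UNIV f}" using f by simp
  obtain D where D: "\<And>x y::'c. dist x y \<le> D" using diam_bound[OF cpt] by blast
  define x0 :: 'c where "x0 = undefined"
  show "bdd_above ((\<lambda>f. integral\<^sup>L \<mu> f - integral\<^sup>L \<nu> f) ` {f :: 'c \<Rightarrow> real. 1-lipschitz_on UNIV f})"
  proof -
  have "\<forall>y \<in> (\<lambda>f. integral\<^sup>L \<mu> f - integral\<^sup>L \<nu> f) ` {f :: 'c \<Rightarrow> real. 1-lipschitz_on UNIV f}. y \<le> 2 * D"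
  proof
    fix y assume "y \<in> (\<lambda>f. integral\<^sup>L \<mu> f - integral\<^sup>L \<nu> f) ` {f :: 'c \<Rightarrow> real. 1-lipschitz_on UNIV f}"
    then obtain g :: "'c \<Rightarrow> real" where yg: "y = integral\<^sup>L \<mu> g - integral\<^sup>L \<nu> g" and "g \<in> {f. 1-lipschitz_on UNIV f}"
      by blast
    then have g: "1-lipschitz_on UNIV g" by simp
    have b: "\<bar>g x - g x0\<bar> \<le> D" for x
      using lipschitz_onD[OF g, of x x0] D[of x x0] by (simp add: dist_real_def)
    have b1: "g x \<le> g x0 + D" and b2: "g x0 - D \<le> g x" for x using b[of x] by linarith+
    have "integral\<^sup>L \<mu> g \<le> integral\<^sup>L \<mu> (\<lambda>x. g x0 + D)"
      using b1 by (intro integral_mono lip_integrable[OF cpt P(1) g]) auto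
    moreover have "integral\<^sup>L \<nu> (\<lambda>x. g x0 - D) \<le> integral\<^sup>L \<nu> g"
      using b2 by (intro integral_mono lip_integrable[OF cpt P(2) g]) auto
    ultimately show "y \<le> 2 * D"
      using M.prob_space N.prob_space yg by simp
  qed
  then show ?thesis unfolding bdd_above_def by blast
  qed
qed
qed

lemma dMK_le:
  assumes "\<And>f. 1-lipschitz_on UNIV f \<Longrightarrow> integral\<^sup>L \<mu> f - integral\<^sup>L \<nu> f \<le> c"
  shows "dMK \<mu> \<nu> \<le> c"
  unfolding dMK_def by (rule cSUP_least) (use lip0 assms in auto)

lemma dMK_nonneg:
  fixes \<mu> \<nu> :: "'c::metric_space measure"
  assumes cpt: "compact (UNIV :: 'c set)" and P: "\<mu> \<in> Prob" "\<nu> \<in> Prob"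
  shows "0 \<le> dMK \<mu> \<nu>"
  using dMK_ge[OF cpt P lip0] by simp

lemma dMK_lip:
  fixes \<mu> \<nu> :: "'c::metric_space measure"
  assumes cpt: "compact (UNIV :: 'c set)" and P: "\<mu> \<in> Prob" "\<nu> \<in> Prob"
    and f: "K-lipschitz_on UNIV f"
  shows "integral\<^sup>L \<mu> f - integral\<^sup>L \<nu> f \<le> K * dMK \<mu> \<nu>"
proof (cases "K = 0")
  case True
  define x0 :: 'c where "x0 = undefined"
  have feq: "f x = f x0" for x using lipschitz_onD[OF f, of x x0] True by simp
  have "integral\<^sup>L \<mu> f = integral\<^sup>L \<mu> (\<lambda>x. f x0)" by (rule Bochner_Integration.integral_cong[OF refl feq])
  moreover have "integral\<^sup>L \<nu> f = integral\<^sup>L \<nu> (\<lambda>x. f x0)" by (rule Bochner_Integration.integral_cong[OF refl feq])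
  ultimately show ?thesis using True prob_space.prob_space[OF ProbD(1)[OF P(1)]]
    prob_space.prob_space[OF ProbD(1)[OF P(2)]] by simp
next
  case False
  then have K: "K > 0" using lipschitz_on_nonneg[OF f] by simp
  have "(\<bar>1/K\<bar> * K)-lipschitz_on UNIV (\<lambda>x. (1/K) * f x)" by (rule lipschitz_on_cmult_real[OF f])
  then have g: "1-lipschitz_on UNIV (\<lambda>x. (1/K) * f x)" using K by simp
  have "integral\<^sup>L \<mu> (\<lambda>x. (1/K) * f x) - integral\<^sup>L \<nu> (\<lambda>x. (1/K) * f x) \<le> dMK \<mu> \<nu>"
    by (rule dMK_ge[OF cpt P g])
  then have "(1/K) * (integral\<^sup>L \<mu> f - integral\<^sup>L \<nu> f) \<le> dMK \<mu> \<nu>"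
    by (simp add: right_diff_distrib)
  then show ?thesis using K by (simp add: field_simps)
qed

lemma dMK_abs:
  fixes \<mu> \<nu> :: "'c::metric_space measure"
  assumes cpt: "compact (UNIV :: 'c set)" and P: "\<mu> \<in> Prob" "\<nu> \<in> Prob"
    and f: "K-lipschitz_on UNIV f"
  shows "\<bar>integral\<^sup>L \<mu> f - integral\<^sup>L \<nu> f\<bar> \<le> K * dMK \<mu> \<nu>"
proof -
  have "integral\<^sup>L \<mu> (\<lambda>x. - f x) - integral\<^sup>L \<nu> (\<lambda>x. - f x) \<le> K * dMK \<mu> \<nu>"
    using f by (intro dMK_lip[OF cpt P]) simp
  then show ?thesis using dMK_lip[OF cpt P f] by (simp add: abs_le_iff)
qed

lemma measure_determined:
  fixes \<mu> \<nu> :: "'c::metric_space measure"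
  assumes cpt: "compact (UNIV :: 'c set)" and P: "\<mu> \<in> Prob" "\<nu> \<in> Prob"
    and eq: "\<And>f::'c \<Rightarrow> real. 1-lipschitz_on UNIV f \<Longrightarrow> integral\<^sup>L \<mu> f = integral\<^sup>L \<nu> f"
  shows "\<mu> = \<nu>"
proof -
  interpret M: prob_space \<mu> by (rule ProbD(1)[OF P(1)])
  interpret N: prob_space \<nu> by (rule ProbD(1)[OF P(2)])
  have closed_eq: "measure \<mu> C = measure \<nu> C" if C: "closed C" for C
  proof (cases "C = {}")
    case True then show ?thesis by simp
  next
    case False
    define s where "s n x = real (Suc n) * max 0 (1 / real (Suc n) - infdist x C)" for n x
    have hl: "1-lipschitz_on UNIV (\<lambda>x::'c. max 0 (1 / real (Suc n) - infdist x C))" for n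
    proof (rule lipschitz_onI)
      fix x y :: 'c
      have "\<bar>infdist x C - infdist y C\<bar> \<le> dist x y" by (rule infdist_triangle_abs)
      then show "dist (max 0 (1 / real (Suc n) - infdist x C)) (max 0 (1 / real (Suc n) - infdist y C)) \<le> 1 * dist x y"
        unfolding dist_real_def max_def by auto
    qed simp
    have sc: "continuous_on UNIV (s n)" for n unfolding s_def by (intro continuous_intros)
    have int_eq: "integral\<^sup>L \<mu> (s n) = integral\<^sup>L \<nu> (s n)" for n
      unfolding s_def using eq[OF hl[of n]] by simp
    have s_bound: "norm (s n x) \<le> 1" for n x
    proof -
      have "max 0 (1 / real (Suc n) - infdist x C) \<le> 1 / real (Suc n)"
        using infdist_nonneg[of x C] by simp
      then have "s n x \<le> real (Suc n) * (1 / real (Suc n))"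
        unfolding s_def by (intro mult_left_mono) auto
      moreover have "0 \<le> s n x" unfolding s_def by simp
      ultimately show ?thesis by simp
    qed
    have lim: "(\<lambda>n. s n x) \<longlonglongrightarrow> indicator C x" for x
    proof (cases "x \<in> C")
      case True
      then have "s n x = 1" for n unfolding s_def by simp
      then show ?thesis using True by simp
    next
      case xC: False
      have d: "infdist x C > 0" using infdist_pos_not_in_closed[OF C False xC] .
      obtain N where N: "N > 0" "inverse (real N) < infdist x C" using ex_inverse_of_nat_less[OF d] by blast
      have "eventually (\<lambda>n. s n x = 0) sequentially"
        unfolding eventually_sequentially
      proof (intro exI allI impI)
        fix n assume "N \<le> n"
        then have "1 / real (Suc n) \<le> inverse (real N)" using N
          by (simp add: inverse_eq_divide frac_le)
        then show "s n x = 0" unfolding s_def using N by simp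
      qed
      then show ?thesis using xC by (simp add: tendsto_eventually)
    qed
    have Cs: "C \<in> sets borel" using C by simp
    have "(\<lambda>n. integral\<^sup>L \<mu> (s n)) \<longlonglongrightarrow> integral\<^sup>L \<mu> (indicator C)"
    proof (rule integral_dominated_convergence[where w="\<lambda>x. 1"])
      have "C \<in> sets \<mu>" using Cs ProbD(2)[OF P(1)] by simp
      then show "indicator C \<in> borel_measurable \<mu>" by (rule borel_measurable_indicator)
      show "s n \<in> borel_measurable \<mu>" for n by (rule cont_measurable[OF ProbD(2)[OF P(1)] sc])
      show "integrable \<mu> (\<lambda>x. 1)" by simp
      show "AE x in \<mu>. (\<lambda>n. s n x) \<longlonglongrightarrow> indicator C x" using lim by simp
      show "AE x in \<mu>. norm (s n x) \<le> 1" for n using s_bound by simp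
    qed
    moreover have "(\<lambda>n. integral\<^sup>L \<nu> (s n)) \<longlonglongrightarrow> integral\<^sup>L \<nu> (indicator C)"
    proof (rule integral_dominated_convergence[where w="\<lambda>x. 1"])
      have "C \<in> sets \<nu>" using Cs ProbD(2)[OF P(2)] by simp
      then show "indicator C \<in> borel_measurable \<nu>" by (rule borel_measurable_indicator)
      show "s n \<in> borel_measurable \<nu>" for n by (rule cont_measurable[OF ProbD(2)[OF P(2)] sc])
      show "integrable \<nu> (\<lambda>x. 1)" by simp
      show "AE x in \<nu>. (\<lambda>n. s n x) \<longlonglongrightarrow> indicator C x" using lim by simp
      show "AE x in \<nu>. norm (s n x) \<le> 1" for n using s_bound by simp
    qed
    ultimately have "integral\<^sup>L \<mu> (indicator C :: 'c \<Rightarrow> real) = integral\<^sup>L \<nu> (indicator C)"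
      using int_eq LIMSEQ_unique by simp
    then show ?thesis using ProbD(3)[OF P(1)] ProbD(3)[OF P(2)] by simp
  qed
  have sg: "sets borel = sigma_sets UNIV (Collect closed :: 'c set set)"
    by (subst borel_eq_closed) (rule sets_measure_of, simp)
  show ?thesis
  proof (rule measure_eqI_generator_eq[where E="Collect closed" and \<Omega>=UNIV and A="\<lambda>_. UNIV"])
    show "Int_stable (Collect closed :: 'c set set)" by (auto simp: Int_stable_def)
    show "Collect closed \<subseteq> Pow (UNIV :: 'c set)" by simp
    fix X :: "'c set" assume "X \<in> Collect closed"
    then show "emeasure \<mu> X = emeasure \<nu> X"
      using closed_eq by (simp add: M.emeasure_eq_measure N.emeasure_eq_measure)
  qed (use ProbD(2)[OF P(1)] ProbD(2)[OF P(2)] sg in auto)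
qed

lemma measure_determined_cont:
  fixes \<mu> \<nu> :: "'c::metric_space measure"
  assumes cpt: "compact (UNIV :: 'c set)" and P: "\<mu> \<in> Prob" "\<nu> \<in> Prob"
    and eq: "\<And>f::'c \<Rightarrow> real. continuous_on UNIV f \<Longrightarrow> integral\<^sup>L \<mu> f = integral\<^sup>L \<nu> f"
  shows "\<mu> = \<nu>"
  using measure_determined[OF cpt P] eq lipschitz_on_continuous_on by blast

lemma lip_mult:
  fixes f g :: "'c::metric_space \<Rightarrow> real"
  assumes cpt: "compact (UNIV :: 'c set)" and f: "K1-lipschitz_on UNIV f" and g: "K2-lipschitz_on UNIV g"
  shows "\<exists>K. K-lipschitz_on UNIV (\<lambda>x. f x * g x)"
proof -
  obtain B1 where B1: "B1 > 0" "\<And>x. \<bar>f x\<bar> \<le> B1"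
    using cont_bounded[OF cpt lipschitz_on_continuous_on[OF f]] by blast
  obtain B2 where B2: "B2 > 0" "\<And>x. \<bar>g x\<bar> \<le> B2"
    using cont_bounded[OF cpt lipschitz_on_continuous_on[OF g]] by blast
  have K: "0 \<le> K1" "0 \<le> K2" using lipschitz_on_nonneg f g by auto
  show ?thesis
  proof (intro exI lipschitz_onI)
    fix x y
    have a: "\<bar>f x - f y\<bar> \<le> K1 * dist x y" using lipschitz_onD[OF f, of x y] by (simp add: dist_real_def)
    have b: "\<bar>g x - g y\<bar> \<le> K2 * dist x y" using lipschitz_onD[OF g, of x y] by (simp add: dist_real_def)
    have "dist (f x * g x) (f y * g y) = \<bar>f x * (g x - g y) + g y * (f x - f y)\<bar>"
      by (simp add: dist_real_def algebra_simps)
    also have "\<dots> \<le> \<bar>f x\<bar> * \<bar>g x - g y\<bar> + \<bar>g y\<bar> * \<bar>f x - f y\<bar>"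
      by (metis abs_mult abs_triangle_ineq)
    also have "\<dots> \<le> B1 * (K2 * dist x y) + B2 * (K1 * dist x y)"
      using B1 B2 a b by (intro add_mono mult_mono) auto
    finally show "dist (f x * g x) (f y * g y) \<le> (B1 * K2 + B2 * K1) * dist x y"
      by (simp add: algebra_simps)
  next
    show "0 \<le> B1 * K2 + B2 * K1" using B1 B2 K by simp
  qed
qed

lemma lip_dense:
  fixes f :: "'c::metric_space \<Rightarrow> real"
  assumes cpt: "compact (UNIV :: 'c set)" and f: "continuous_on UNIV f" and e: "e > 0"
  shows "\<exists>g K. K-lipschitz_on UNIV g \<and> (\<forall>x. \<bar>f x - g x\<bar> < e)"
proof -
  define R where "R = {g::'c \<Rightarrow> real. \<exists>K. K-lipschitz_on UNIV g}"
  have R1: "continuous_on UNIV g" if "g \<in> R" for g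
  proof -
    from that obtain K where "K-lipschitz_on UNIV g" unfolding R_def by blast
    then show ?thesis by (rule lipschitz_on_continuous_on)
  qed
  have R2: "(\<lambda>x. g x + h x) \<in> R" if "g \<in> R" "h \<in> R" for g h
  proof -
    from that obtain K1 K2 where "K1-lipschitz_on UNIV g" "K2-lipschitz_on UNIV h" unfolding R_def by blast
    then have "(K1 + K2)-lipschitz_on UNIV (\<lambda>x. g x + h x)" by (rule lipschitz_on_add)
    then show ?thesis unfolding R_def by (intro CollectI exI)
  qed
  have R3: "(\<lambda>x. g x * h x) \<in> R" if "g \<in> R" "h \<in> R" for g h
  proof -
    from that obtain K1 K2 where "K1-lipschitz_on UNIV g" "K2-lipschitz_on UNIV h" unfolding R_def by blast
    then have "\<exists>K. K-lipschitz_on UNIV (\<lambda>x. g x * h x)" by (rule lip_mult[OF cpt])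
    then show ?thesis unfolding R_def by (intro CollectI)
  qed
  have R4: "(\<lambda>_. c) \<in> R" for c
    unfolding R_def by (intro CollectI exI) (rule lipschitz_on_constant)
  have R5: "\<exists>g\<in>R. g x \<noteq> g y" if "x \<noteq> y" for x y
  proof -
    have "1-lipschitz_on UNIV (\<lambda>z. infdist z {x})"
    proof (rule lipschitz_onI)
      fix a b :: 'c
      show "dist (infdist a {x}) (infdist b {x}) \<le> 1 * dist a b"
        unfolding dist_real_def[of "infdist a {x}"] using infdist_triangle_abs[of a "{x}" b] by simp
    qed simp
    then have mem: "(\<lambda>z. infdist z {x}) \<in> R" unfolding R_def by (intro CollectI exI)
    show ?thesis
    proof (rule bexI[OF _ mem])
      show "infdist x {x} \<noteq> infdist y {x}" using that by simp
    qed
  qed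
  have fr: "function_ring_on R (UNIV :: 'c set)"
    apply (rule function_ring_on.intro)
         apply (rule cpt)
        apply (erule R1)
       apply (erule (1) R2)
      apply (erule (1) R3)
     apply (rule R4)
    apply (erule R5)
    done
  from function_ring_on.Stone_Weierstrass_basic[OF fr f e] obtain g where "g \<in> R" "\<forall>x\<in>UNIV. \<bar>f x - g x\<bar> < e"
    by blast
  then show ?thesis unfolding R_def by auto
qed


lemma geometric_cauchy:
  fixes a :: "nat \<Rightarrow> real"
  assumes step: "\<And>k. \<bar>a k - a (Suc k)\<bar> \<le> B * c ^ k" and c: "0 \<le> c" "c < 1"
  shows "\<exists>l. a \<longlonglongrightarrow> l \<and> (\<forall>k. \<bar>a k - l\<bar> \<le> B * c ^ k / (1 - c))"
proof -
  have B: "0 \<le> B" using step[of 0] by simp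
  have b1: "\<bar>a k - a m\<bar> \<le> B * (c ^ k - c ^ m) / (1 - c)" if "k \<le> m" for k m
    using that
  proof (induction m rule: dec_induct)
    case base then show ?case by simp
  next
    case (step m)
    have "\<bar>a k - a (Suc m)\<bar> \<le> \<bar>a k - a m\<bar> + \<bar>a m - a (Suc m)\<bar>" by linarith
    also have "\<dots> \<le> B * (c ^ k - c ^ m) / (1 - c) + B * c ^ m" using step.IH assms(1)[of m] by linarith
    also have "\<dots> = B * (c ^ k - c ^ Suc m) / (1 - c)" using c by (simp add: field_simps)
    finally show ?case .
  qed
  have b2: "\<bar>a k - a m\<bar> \<le> B * c ^ k / (1 - c)" if "k \<le> m" for k m
  proof -
    have "B * (c ^ k - c ^ m) / (1 - c) \<le> B * c ^ k / (1 - c)"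
      using B c by (intro divide_right_mono mult_left_mono) auto
    then show ?thesis using b1[OF that] by linarith
  qed
  have lim0: "(\<lambda>k. B * c ^ k / (1 - c)) \<longlonglongrightarrow> 0"
    using c by (auto intro!: tendsto_eq_intros LIMSEQ_power_zero)
  have "Cauchy a"
  proof (rule CauchyI)
    fix e :: real assume e: "0 < e"
    then have "eventually (\<lambda>k. B * c ^ k / (1 - c) < e / 2) sequentially"
      using lim0 by (intro order_tendstoD) auto
    then obtain M where M: "\<And>k. k \<ge> M \<Longrightarrow> B * c ^ k / (1 - c) < e / 2"
      unfolding eventually_sequentially by blast
    show "\<exists>M. \<forall>m\<ge>M. \<forall>n\<ge>M. norm (a m - a n) < e"
    proof (intro exI allI impI)
      fix m n assume "M \<le> m" "M \<le> n"
      then have "\<bar>a M - a m\<bar> < e / 2" "\<bar>a M - a n\<bar> < e / 2"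
        using b2 M[of M] by (meson le_less_trans order_refl)+
      then show "norm (a m - a n) < e" unfolding real_norm_def by linarith
    qed
  qed
  then obtain l where l: "a \<longlonglongrightarrow> l" using Cauchy_convergent_iff convergent_def by blast
  have "\<bar>a k - l\<bar> \<le> B * c ^ k / (1 - c)" for k
  proof (rule LIMSEQ_le_const2)
    show "(\<lambda>m. \<bar>a k - a m\<bar>) \<longlonglongrightarrow> \<bar>a k - l\<bar>" by (intro tendsto_intros l)
    show "\<exists>N. \<forall>n\<ge>N. \<bar>a k - a n\<bar> \<le> B * c ^ k / (1 - c)" using b2 by blast
  qed
  then show ?thesis using l by blast
qed

lemma int_close:
  fixes f g :: "'c::metric_space \<Rightarrow> real"
  assumes cpt: "compact (UNIV :: 'c set)" and P: "\<mu> \<in> Prob"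
    and fc: "continuous_on UNIV f" and gc: "continuous_on UNIV g" and fg: "\<And>x. \<bar>f x - g x\<bar> \<le> e"
  shows "\<bar>integral\<^sup>L \<mu> f - integral\<^sup>L \<mu> g\<bar> \<le> e"
proof -
  interpret M: prob_space \<mu> by (rule ProbD(1)[OF P])
  have fi: "integrable \<mu> f" and gi: "integrable \<mu> g"
    using cont_integrable[OF cpt ProbD(1,2)[OF P]] fc gc by auto
  have "integral\<^sup>L \<mu> f - integral\<^sup>L \<mu> g = integral\<^sup>L \<mu> (\<lambda>x. f x - g x)"
    using fi gi by simp
  also have "\<bar>\<dots>\<bar> \<le> integral\<^sup>L \<mu> (\<lambda>x. \<bar>f x - g x\<bar>)" by (rule integral_abs_bound)
  also have "\<dots> \<le> integral\<^sup>L \<mu> (\<lambda>x. e)"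
    using fi gi fg by (intro integral_mono) auto
  also have "\<dots> = e" using M.prob_space by simp
  finally show ?thesis .
qed


locale setting =
  fixes \<tau> :: "'b::metric_space \<Rightarrow> 'a::metric_space \<Rightarrow> 'a"
    and q :: "'a \<Rightarrow> 'b measure"
    and s r t :: real
  assumes X_compact: "compact (UNIV :: 'a set)"
    and L_compact: "compact (UNIV :: 'b set)"
    and tau_cont: "continuous_on UNIV (\<lambda>(l, x). \<tau> l x)"
    and q_prob: "\<And>x. q x \<in> Prob"
    and q_cont: "\<And>g :: 'b \<Rightarrow> real. continuous_on UNIV g \<Longrightarrow>
                   continuous_on UNIV (\<lambda>x. \<integral>l. g l \<partial>(q x))"
    and M1a: "s > 0"
    and M1b: "\<And>x y (f :: 'a \<Rightarrow> real). 1-lipschitz_on UNIV f \<Longrightarrow>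
         (\<integral>l. \<bar>f (\<tau> l x) - f (\<tau> l y)\<bar> \<partial>(q x)) \<le> s * dist x y"
    and H2a: "r \<ge> 0" and H2b: "\<And>l1 l2 x. dist (\<tau> l1 x) (\<tau> l2 x) \<le> r * dist l1 l2"
    and H3a: "t \<ge> 0" and H3b: "\<And>x y. dMK (q x) (q y) \<le> t * dist x y"
    and contr: "s + r * t < 1"
begin

definition P :: "('a \<Rightarrow> real) \<Rightarrow> 'a \<Rightarrow> real" where
  "P f x = (\<integral>l. f (\<tau> l x) \<partial>(q x))"

lemma tau_cont_l: "continuous_on UNIV (\<lambda>l. \<tau> l x)"
proof -
  have "continuous_on UNIV ((\<lambda>(l, x). \<tau> l x) \<circ> (\<lambda>l. (l, x)))"
    by (rule continuous_on_compose[OF _ continuous_on_subset[OF tau_cont]]) (auto intro: continuous_intros)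
  then show ?thesis by (simp add: o_def)
qed

lemma comp_cont: "continuous_on UNIV f \<Longrightarrow> continuous_on UNIV (\<lambda>l. f (\<tau> l x))"
  by (rule continuous_on_compose2[OF _ tau_cont_l]) auto

lemma comp_int: "continuous_on UNIV (f :: 'a \<Rightarrow> real) \<Longrightarrow> integrable (q y) (\<lambda>l. f (\<tau> l x))"
  by (rule cont_integrable[OF L_compact ProbD(1,2)[OF q_prob] comp_cont])

lemma P_cont:
  assumes fc: "continuous_on UNIV f"
  shows "continuous_on UNIV (P f)"
  unfolding continuous_on_iff
proof (intro ballI allI impI)
  fix x0 :: 'a and e :: real assume e: "0 < e"
  define h where "h = (\<lambda>(l, x). f (\<tau> l x))"
  have hc: "continuous_on UNIV h" unfolding h_def
    using continuous_on_compose2[OF fc tau_cont] by (simp add: case_prod_beta)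
  have "uniformly_continuous_on UNIV h"
    using compact_uniformly_continuous[OF hc] compact_Times[OF L_compact X_compact] by simp
  then obtain d2 where d2: "d2 > 0" "\<And>z z'. dist z' z < d2 \<Longrightarrow> dist (h z') (h z) < e / 2"
    unfolding uniformly_continuous_on_def using e by (metis UNIV_I half_gt_zero)
  define G where "G x = (\<integral>l. f (\<tau> l x0) \<partial>(q x))" for x
  have Gc: "continuous_on UNIV G" unfolding G_def by (intro q_cont comp_cont fc)
  then obtain d1 where d1: "d1 > 0" "\<And>x. dist x x0 < d1 \<Longrightarrow> dist (G x) (G x0) < e / 2"
    unfolding continuous_on_iff using e by (metis UNIV_I half_gt_zero)
  show "\<exists>d>0. \<forall>x'\<in>UNIV. dist x' x0 < d \<longrightarrow> dist (P f x') (P f x0) < e"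
  proof (intro exI[of _ "min d1 d2"] conjI ballI impI)
    show "0 < min d1 d2" using d1 d2 by simp
    fix x assume "x \<in> UNIV" "dist x x0 < min d1 d2"
    then have x1: "dist x x0 < d1" and x2: "dist x x0 < d2" by auto
    interpret Q: prob_space "q x" by (rule ProbD(1)[OF q_prob])
    have pt: "\<bar>f (\<tau> l x) - f (\<tau> l x0)\<bar> \<le> e / 2" for l
    proof -
      have "dist (l, x) (l, x0) = dist x x0" by (simp add: dist_Pair_Pair)
      then have "dist (h (l, x)) (h (l, x0)) < e / 2" using d2(2) x2 by simp
      then show ?thesis unfolding h_def by (simp add: dist_real_def)
    qed
    have "\<bar>P f x - G x\<bar> \<le> e / 2"
    proof -
      have "P f x - G x = (\<integral>l. f (\<tau> l x) - f (\<tau> l x0) \<partial>(q x))"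
        unfolding P_def G_def by (rule Bochner_Integration.integral_diff[OF comp_int[OF fc] comp_int[OF fc], symmetric])
      also have "\<bar>\<dots>\<bar> \<le> (\<integral>l. \<bar>f (\<tau> l x) - f (\<tau> l x0)\<bar> \<partial>(q x))" by (rule integral_abs_bound)
      also have "\<dots> \<le> (\<integral>l. e / 2 \<partial>(q x))"
        using pt comp_int[OF fc] by (intro integral_mono) auto
      also have "\<dots> = e / 2" using Q.prob_space by simp
      finally show ?thesis .
    qed
    moreover have "\<bar>G x - G x0\<bar> < e / 2" using d1(2)[OF x1] by (simp add: dist_real_def)
    moreover have "G x0 = P f x0" unfolding G_def P_def by simp
    ultimately show "dist (P f x) (P f x0) < e" unfolding dist_real_def by linarith
  qed
qed

lemma P_add: "continuous_on UNIV f \<Longrightarrow> continuous_on UNIV g \<Longrightarrow> P (\<lambda>x. f x + g x) = (\<lambda>x. P f x + P g x)"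
  unfolding P_def by (intro ext Bochner_Integration.integral_add comp_int)

lemma P_scale: "P (\<lambda>x. c * f x) = (\<lambda>x. c * P f x)"
  unfolding P_def by auto

lemma P_mono: "continuous_on UNIV f \<Longrightarrow> continuous_on UNIV g \<Longrightarrow> (\<And>x. f x \<le> g x) \<Longrightarrow> P f x \<le> P g x"
  unfolding P_def by (auto intro!: integral_mono comp_int)

lemma P_one: "P (\<lambda>x. 1) = (\<lambda>x. 1)"
  unfolding P_def using prob_space.prob_space[OF ProbD(1)[OF q_prob]] by auto

definition c :: real where "c = s + r * t"

lemma c_pos: "0 < c" "c < 1"
  using M1a mult_nonneg_nonneg[OF H2a H3a] contr unfolding c_def by auto

lemma P_lip:
  assumes f: "1-lipschitz_on UNIV f"
  shows "c-lipschitz_on UNIV (P f)"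
proof (rule lipschitz_onI)
  have fc: "continuous_on UNIV f" by (rule lipschitz_on_continuous_on[OF f])
  have one: "P f x - P f y \<le> c * dist x y" for x y
  proof -
    have ri: "r-lipschitz_on UNIV (\<lambda>l. f (\<tau> l y))"
    proof (rule lipschitz_onI)
      fix a b
      have "dist (f (\<tau> a y)) (f (\<tau> b y)) \<le> 1 * dist (\<tau> a y) (\<tau> b y)"
        by (rule lipschitz_onD[OF f]) auto
      also have "\<dots> \<le> r * dist a b" using H2b by simp
      finally show "dist (f (\<tau> a y)) (f (\<tau> b y)) \<le> r * dist a b" .
    qed (rule H2a)
    have "P f x - P f y = (\<integral>l. f (\<tau> l x) - f (\<tau> l y) \<partial>(q x)) +
        ((\<integral>l. f (\<tau> l y) \<partial>(q x)) - (\<integral>l. f (\<tau> l y) \<partial>(q y)))"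
      unfolding P_def using Bochner_Integration.integral_diff[OF comp_int[OF fc] comp_int[OF fc], of x x y] by simp
    also have "(\<integral>l. f (\<tau> l x) - f (\<tau> l y) \<partial>(q x)) \<le> (\<integral>l. \<bar>f (\<tau> l x) - f (\<tau> l y)\<bar> \<partial>(q x))"
      using comp_int[OF fc] by (intro integral_mono) auto
    also have "\<dots> \<le> s * dist x y" by (rule M1b[OF f])
    also have "(\<integral>l. f (\<tau> l y) \<partial>(q x)) - (\<integral>l. f (\<tau> l y) \<partial>(q y)) \<le> r * dMK (q x) (q y)"
      by (rule dMK_lip[OF L_compact q_prob q_prob ri])
    also have "\<dots> \<le> r * (t * dist x y)" using H3b H2a by (intro mult_left_mono) auto
    finally show ?thesis unfolding c_def by (simp add: algebra_simps)
  qed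
  fix x y
  show "dist (P f x) (P f y) \<le> c * dist x y"
    using one[of x y] one[of y x] by (simp add: dist_real_def dist_commute abs_le_iff)
next
  show "0 \<le> c" using c_pos by simp
qed

end


context setting
begin

lemma Peq: "P f = (\<lambda>x. \<integral>l. f (\<tau> l x) \<partial>(q x))"
  by (rule ext) (simp add: P_def)

lemma Tq_char:
  assumes \<mu>: "\<mu> \<in> Prob"
  shows "Tq q \<tau> \<mu> \<in> Prob \<and> (\<forall>f. continuous_on UNIV f \<longrightarrow> integral\<^sup>L (Tq q \<tau> \<mu>) f = integral\<^sup>L \<mu> (P f))"
proof -
  have Pint: "integrable \<mu> (P f)" if "continuous_on UNIV f" for f :: "'a \<Rightarrow> real"
    by (rule cont_integrable[OF X_compact ProbD(1,2)[OF \<mu>] P_cont[OF that]])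
  define Lf where "Lf f = integral\<^sup>L \<mu> (P f)" for f
  have "\<exists>\<nu>\<in>Prob. \<forall>f. continuous_on UNIV f \<longrightarrow> integral\<^sup>L \<nu> f = Lf f"
  proof (rule riesz[OF X_compact])
    fix f g :: "'a \<Rightarrow> real" assume fg: "continuous_on UNIV f" "continuous_on UNIV g"
    then show "Lf (\<lambda>x. f x + g x) = Lf f + Lf g" unfolding Lf_def P_add[OF fg]
      by (intro Bochner_Integration.integral_add Pint)
  next
    fix f :: "'a \<Rightarrow> real" and a :: real assume "continuous_on UNIV f"
    show "Lf (\<lambda>x. a * f x) = a * Lf f" unfolding Lf_def P_scale by simp
  next
    fix f g :: "'a \<Rightarrow> real" assume fg: "continuous_on UNIV f" "continuous_on UNIV g" and le: "\<And>x. f x \<le> g x"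
    show "Lf f \<le> Lf g" unfolding Lf_def
      by (intro integral_mono Pint P_mono fg le)
  next
    show "Lf (\<lambda>x. 1) = 1" unfolding Lf_def P_one by (rule integral_const_prob[OF \<mu>])
  qed
  then obtain \<nu> where \<nu>: "\<nu> \<in> Prob" "\<And>f. continuous_on UNIV f \<Longrightarrow> integral\<^sup>L \<nu> f = Lf f" by blast
  have "Tq q \<tau> \<mu> = \<nu>" unfolding Tq_def
  proof (rule the_equality)
    show "\<nu> \<in> Prob \<and> (\<forall>f::'a \<Rightarrow> real. continuous_on UNIV f \<longrightarrow> integral\<^sup>L \<nu> f = (\<integral>x. (\<integral>l. f (\<tau> l x) \<partial>(q x)) \<partial>\<mu>))"
      using \<nu> unfolding Lf_def Peq by simp
  next
    fix \<nu>' assume h: "\<nu>' \<in> Prob \<and> (\<forall>f::'a \<Rightarrow> real. continuous_on UNIV f \<longrightarrow> integral\<^sup>L \<nu>' f = (\<integral>x. (\<integral>l. f (\<tau> l x) \<partial>(q x)) \<partial>\<mu>))"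
    show "\<nu>' = \<nu>"
    proof (rule measure_determined_cont[OF X_compact])
      show "\<nu>' \<in> Prob" "\<nu> \<in> Prob" using h \<nu> by auto
      fix f :: "'a \<Rightarrow> real" assume "continuous_on UNIV f"
      then show "integral\<^sup>L \<nu>' f = integral\<^sup>L \<nu> f" using h \<nu>(2) unfolding Lf_def Peq by simp
    qed
  qed
  then show ?thesis using \<nu> unfolding Lf_def by simp
qed

abbreviation T where "T \<equiv> Tq q \<tau>"

lemma T_Prob: "\<mu> \<in> Prob \<Longrightarrow> T \<mu> \<in> Prob"
  using Tq_char by blast

lemma T_int: "\<mu> \<in> Prob \<Longrightarrow> continuous_on UNIV f \<Longrightarrow> integral\<^sup>L (T \<mu>) f = integral\<^sup>L \<mu> (P f)"
  using Tq_char by blast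

lemma T_contr:
  assumes \<mu>: "\<mu> \<in> Prob" and \<nu>: "\<nu> \<in> Prob"
  shows "dMK (T \<mu>) (T \<nu>) \<le> c * dMK \<mu> \<nu>"
proof (rule dMK_le)
  fix f :: "'a \<Rightarrow> real" assume f: "1-lipschitz_on UNIV f"
  have fc: "continuous_on UNIV f" by (rule lipschitz_on_continuous_on[OF f])
  show "integral\<^sup>L (T \<mu>) f - integral\<^sup>L (T \<nu>) f \<le> c * dMK \<mu> \<nu>"
    using dMK_lip[OF X_compact \<mu> \<nu> P_lip[OF f]] T_int[OF \<mu> fc] T_int[OF \<nu> fc] by simp
qed

lemma T_pow_Prob: "\<mu> \<in> Prob \<Longrightarrow> (T ^^ k) \<mu> \<in> Prob"
  by (induction k) (auto intro: T_Prob)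

lemma T_pow_contr:
  assumes \<mu>: "\<mu> \<in> Prob" and \<nu>: "\<nu> \<in> Prob"
  shows "dMK ((T ^^ k) \<mu>) ((T ^^ k) \<nu>) \<le> c ^ k * dMK \<mu> \<nu>"
proof (induction k)
  case 0 then show ?case by simp
next
  case (Suc k)
  have "dMK ((T ^^ Suc k) \<mu>) ((T ^^ Suc k) \<nu>) \<le> c * dMK ((T ^^ k) \<mu>) ((T ^^ k) \<nu>)"
    using T_contr[OF T_pow_Prob[OF \<mu>] T_pow_Prob[OF \<nu>]] by simp
  also have "\<dots> \<le> c * (c ^ k * dMK \<mu> \<nu>)" using Suc c_pos by (intro mult_left_mono) auto
  finally show ?case by simp
qed

lemma dMK_zero_eq:
  fixes \<mu> \<nu> :: "'a measure"
  assumes \<mu>: "\<mu> \<in> Prob" and \<nu>: "\<nu> \<in> Prob" and d: "dMK \<mu> \<nu> \<le> 0"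
  shows "\<mu> = \<nu>"
proof (rule measure_determined[OF X_compact \<mu> \<nu>])
  fix f :: "'a \<Rightarrow> real" assume f: "1-lipschitz_on UNIV f"
  have "integral\<^sup>L \<mu> f - integral\<^sup>L \<nu> f \<le> 0" using dMK_ge[OF X_compact \<mu> \<nu> f] d by simp
  moreover have "integral\<^sup>L \<mu> (\<lambda>x. - f x) - integral\<^sup>L \<nu> (\<lambda>x. - f x) \<le> 0"
    using dMK_ge[OF X_compact \<mu> \<nu>, of "\<lambda>x. - f x"] f d by simp
  ultimately show "integral\<^sup>L \<mu> f = integral\<^sup>L \<nu> f" by simp
qed

end


context setting
begin

lemma fixed_exists: "\<exists>\<mu>R\<in>Prob. T \<mu>R = \<mu>R"
proof -
  define \<mu>0 :: "'a measure" where "\<mu>0 = return borel undefined"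
  have \<mu>0: "\<mu>0 \<in> Prob" unfolding \<mu>0_def Prob_def by (auto intro: prob_space_return)
  define m where "m k = (T ^^ k) \<mu>0" for k
  have mP: "m k \<in> Prob" for k unfolding m_def by (rule T_pow_Prob[OF \<mu>0])
  define D where "D = dMK \<mu>0 (T \<mu>0)"
  have D0: "0 \<le> D" unfolding D_def by (rule dMK_nonneg[OF X_compact \<mu>0 T_Prob[OF \<mu>0]])
  have mstep: "dMK (m k) (m (Suc k)) \<le> c ^ k * D" for k
  proof -
    have "m (Suc k) = (T ^^ k) (T \<mu>0)" unfolding m_def funpow_Suc_right by simp
    then show ?thesis unfolding D_def m_def using T_pow_contr[OF \<mu>0 T_Prob[OF \<mu>0], of k] by simp
  qed
  have lipconv: "\<exists>l. (\<lambda>k. integral\<^sup>L (m k) g) \<longlonglongrightarrow> l \<and>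
      (\<forall>k. \<bar>integral\<^sup>L (m k) g - l\<bar> \<le> (K * D) * c ^ k / (1 - c))"
    if g: "K-lipschitz_on UNIV g" for g :: "'a \<Rightarrow> real" and K
  proof (rule geometric_cauchy)
    fix k
    have K0: "0 \<le> K" using lipschitz_on_nonneg[OF g] .
    have "\<bar>integral\<^sup>L (m k) g - integral\<^sup>L (m (Suc k)) g\<bar> \<le> K * dMK (m k) (m (Suc k))"
      by (rule dMK_abs[OF X_compact mP mP g])
    also have "\<dots> \<le> K * (c ^ k * D)" using mstep K0 by (intro mult_left_mono) auto
    finally show "\<bar>integral\<^sup>L (m k) g - integral\<^sup>L (m (Suc k)) g\<bar> \<le> K * D * c ^ k"
      by (simp add: algebra_simps)
  qed (use c_pos in auto)
  have contconv: "convergent (\<lambda>k. integral\<^sup>L (m k) f)" if fc: "continuous_on UNIV f" for f :: "'a \<Rightarrow> real"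
  proof -
    have "Cauchy (\<lambda>k. integral\<^sup>L (m k) f)"
    proof (rule CauchyI)
      fix e :: real assume e: "0 < e"
      obtain g K where g: "K-lipschitz_on UNIV g" and fg: "\<And>x. \<bar>f x - g x\<bar> < e / 3"
        using lip_dense[OF X_compact fc, of "e / 3"] e by auto
      have gc: "continuous_on UNIV g" by (rule lipschitz_on_continuous_on[OF g])
      obtain l where "(\<lambda>k. integral\<^sup>L (m k) g) \<longlonglongrightarrow> l" using lipconv[OF g] by blast
      then have "Cauchy (\<lambda>k. integral\<^sup>L (m k) g)" by (rule LIMSEQ_imp_Cauchy)
      then obtain M where M: "\<And>i j. i \<ge> M \<Longrightarrow> j \<ge> M \<Longrightarrow> \<bar>integral\<^sup>L (m i) g - integral\<^sup>L (m j) g\<bar> < e / 3"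
        using CauchyD[of _ "e / 3"] e by (metis real_norm_def zero_less_divide_iff zero_less_numeral)
      have cl: "\<bar>integral\<^sup>L (m i) f - integral\<^sup>L (m i) g\<bar> \<le> e / 3" for i
        using fg by (intro int_close[OF X_compact mP fc gc]) (simp add: less_imp_le)
      show "\<exists>M. \<forall>i\<ge>M. \<forall>j\<ge>M. norm (integral\<^sup>L (m i) f - integral\<^sup>L (m j) f) < e"
      proof (intro exI allI impI)
        fix i j assume "M \<le> i" "M \<le> j"
        then have "\<bar>integral\<^sup>L (m i) g - integral\<^sup>L (m j) g\<bar> < e / 3" by (rule M)
        then show "norm (integral\<^sup>L (m i) f - integral\<^sup>L (m j) f) < e"
          using cl[of i] cl[of j] unfolding real_norm_def by linarith
      qed
    qed
    then show ?thesis by (simp add: Cauchy_convergent_iff)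
  qed
  define Lc where "Lc f = lim (\<lambda>k. integral\<^sup>L (m k) f)" for f :: "'a \<Rightarrow> real"
  have Lc_lim: "(\<lambda>k. integral\<^sup>L (m k) f) \<longlonglongrightarrow> Lc f" if "continuous_on UNIV f" for f
    unfolding Lc_def using contconv[OF that] by (simp add: convergent_LIMSEQ_iff)
  have mint: "integrable (m k) f" if "continuous_on UNIV f" for f :: "'a \<Rightarrow> real" and k
    by (rule cont_integrable[OF X_compact ProbD(1,2)[OF mP] that])
  have "\<exists>\<mu>\<in>Prob. \<forall>f. continuous_on UNIV f \<longrightarrow> integral\<^sup>L \<mu> f = Lc f"
  proof (rule riesz[OF X_compact])
    fix f g :: "'a \<Rightarrow> real" assume fg: "continuous_on UNIV f" "continuous_on UNIV g"
    have "(\<lambda>k. integral\<^sup>L (m k) (\<lambda>x. f x + g x)) = (\<lambda>k. integral\<^sup>L (m k) f + integral\<^sup>L (m k) g)"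
      using mint fg by (intro ext Bochner_Integration.integral_add) auto
    moreover have "(\<lambda>k. integral\<^sup>L (m k) f + integral\<^sup>L (m k) g) \<longlonglongrightarrow> Lc f + Lc g"
      by (intro tendsto_add Lc_lim fg)
    moreover have "(\<lambda>k. integral\<^sup>L (m k) (\<lambda>x. f x + g x)) \<longlonglongrightarrow> Lc (\<lambda>x. f x + g x)"
      by (intro Lc_lim continuous_intros fg)
    ultimately show "Lc (\<lambda>x. f x + g x) = Lc f + Lc g" using LIMSEQ_unique by metis
  next
    fix f :: "'a \<Rightarrow> real" and a :: real assume fc: "continuous_on UNIV f"
    have "(\<lambda>k. integral\<^sup>L (m k) (\<lambda>x. a * f x)) \<longlonglongrightarrow> a * Lc f"
      using tendsto_mult_left[OF Lc_lim[OF fc], of a] by simp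
    moreover have "(\<lambda>k. integral\<^sup>L (m k) (\<lambda>x. a * f x)) \<longlonglongrightarrow> Lc (\<lambda>x. a * f x)"
      by (intro Lc_lim continuous_intros fc)
    ultimately show "Lc (\<lambda>x. a * f x) = a * Lc f" using LIMSEQ_unique by metis
  next
    fix f g :: "'a \<Rightarrow> real" assume fg: "continuous_on UNIV f" "continuous_on UNIV g" and le: "\<And>x. f x \<le> g x"
    show "Lc f \<le> Lc g"
      by (rule LIMSEQ_le[OF Lc_lim[OF fg(1)] Lc_lim[OF fg(2)]]) (use mint fg le in \<open>auto intro!: integral_mono\<close>)
  next
    have "(\<lambda>k. integral\<^sup>L (m k) (\<lambda>x. 1::real)) = (\<lambda>k. 1)"
      using integral_const_prob[OF mP] by (intro ext) (rule integral_const_prob[OF mP])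
    moreover have "(\<lambda>k. integral\<^sup>L (m k) (\<lambda>x. 1::real)) \<longlonglongrightarrow> Lc (\<lambda>x. 1)"
      by (intro Lc_lim continuous_intros)
    ultimately show "Lc (\<lambda>x. 1) = 1" using LIMSEQ_unique tendsto_const by metis
  qed
  then obtain \<mu>R where \<mu>R: "\<mu>R \<in> Prob" "\<And>f. continuous_on UNIV f \<Longrightarrow> integral\<^sup>L \<mu>R f = Lc f" by blast
  have rate: "\<bar>integral\<^sup>L (m k) f - integral\<^sup>L \<mu>R f\<bar> \<le> D * c ^ k / (1 - c)"
    if f: "1-lipschitz_on UNIV f" for f k
  proof -
    have fc: "continuous_on UNIV f" by (rule lipschitz_on_continuous_on[OF f])
    obtain l where l: "(\<lambda>k. integral\<^sup>L (m k) f) \<longlonglongrightarrow> l"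
      "\<And>k. \<bar>integral\<^sup>L (m k) f - l\<bar> \<le> (1 * D) * c ^ k / (1 - c)"
      using lipconv[OF f] by blast
    have "l = Lc f" using LIMSEQ_unique[OF l(1) Lc_lim[OF fc]] .
    then show ?thesis using l(2)[of k] \<mu>R(2)[OF fc] by simp
  qed
  have mdist: "dMK (m k) \<mu>R \<le> D * c ^ k / (1 - c)" for k
  proof (rule dMK_le)
    fix f :: "'a \<Rightarrow> real" assume f: "1-lipschitz_on UNIV f"
    show "integral\<^sup>L (m k) f - integral\<^sup>L \<mu>R f \<le> D * c ^ k / (1 - c)"
      using abs_le_D1[OF rate[OF f, of k]] .
  qed
  have "T \<mu>R = \<mu>R"
  proof (rule measure_determined[OF X_compact T_Prob[OF \<mu>R(1)] \<mu>R(1)])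
    fix f :: "'a \<Rightarrow> real" assume f: "1-lipschitz_on UNIV f"
    have fc: "continuous_on UNIV f" by (rule lipschitz_on_continuous_on[OF f])
    define z where "z = integral\<^sup>L (T \<mu>R) f - integral\<^sup>L \<mu>R f"
    have zb: "\<bar>z\<bar> \<le> 2 * D * c ^ Suc k / (1 - c)" for k
    proof -
      have e1: "integral\<^sup>L (T \<mu>R) f = integral\<^sup>L \<mu>R (P f)" by (rule T_int[OF \<mu>R(1) fc])
      have e2: "integral\<^sup>L (m (Suc k)) f = integral\<^sup>L (m k) (P f)"
        unfolding m_def using T_int[OF T_pow_Prob[OF \<mu>0] fc, of k] by simp
      have a1: "\<bar>integral\<^sup>L (m k) (P f) - integral\<^sup>L \<mu>R (P f)\<bar> \<le> c * dMK (m k) \<mu>R"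
        by (rule dMK_abs[OF X_compact mP \<mu>R(1) P_lip[OF f]])
      also have "\<dots> \<le> c * (D * c ^ k / (1 - c))" using mdist c_pos by (intro mult_left_mono) auto
      also have "c * (D * c ^ k / (1 - c)) = D * c ^ Suc k / (1 - c)" by (simp add: algebra_simps)
      finally have a1': "\<bar>integral\<^sup>L (m k) (P f) - integral\<^sup>L \<mu>R (P f)\<bar> \<le> D * c ^ Suc k / (1 - c)" .
      have a2: "\<bar>integral\<^sup>L (m (Suc k)) f - integral\<^sup>L \<mu>R f\<bar> \<le> D * c ^ Suc k / (1 - c)"
        by (rule rate[OF f])
      have "\<bar>z\<bar> \<le> D * c ^ Suc k / (1 - c) + D * c ^ Suc k / (1 - c)"
        using a1' a2 e1 e2 unfolding z_def by linarith
      then show ?thesis by simp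
    qed
    have p: "(\<lambda>k. c ^ Suc k) \<longlonglongrightarrow> 0"
      by (rule LIMSEQ_Suc[OF LIMSEQ_power_zero]) (use c_pos in simp)
    have "(\<lambda>k. 2 * D * c ^ Suc k / (1 - c)) \<longlonglongrightarrow> 2 * D * 0 / (1 - c)"
      by (intro tendsto_intros p) (use c_pos in simp)
    then have "(\<lambda>k. 2 * D * c ^ Suc k / (1 - c)) \<longlonglongrightarrow> 0" by simp
    then have "\<bar>z\<bar> \<le> 0" by (rule LIMSEQ_le_const) (use zb in auto)
    then show "integral\<^sup>L (T \<mu>R) f = integral\<^sup>L \<mu>R f" unfolding z_def by simp
  qed
  then show ?thesis using \<mu>R(1) by blast
qed

end


theorem mainTheorem7:
  fixes \<tau> :: "'b::metric_space \<Rightarrow> 'a::metric_space \<Rightarrow> 'a"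
    and q :: "'a \<Rightarrow> 'b measure"
    and s r t :: real
  assumes X_compact: "compact (UNIV :: 'a set)"
    and L_compact: "compact (UNIV :: 'b set)"
    and tau_cont: "continuous_on UNIV (\<lambda>(l, x). \<tau> l x)"
    and q_prob: "\<And>x. q x \<in> Prob"
    and q_cont: "\<And>g :: 'b \<Rightarrow> real. continuous_on UNIV g \<Longrightarrow>
                   continuous_on UNIV (\<lambda>x. \<integral>l. g l \<partial>(q x))"
    and M1: "s > 0"
      "\<And>x y (f :: 'a \<Rightarrow> real). 1-lipschitz_on UNIV f \<Longrightarrow>
         (\<integral>l. \<bar>f (\<tau> l x) - f (\<tau> l y)\<bar> \<partial>(q x)) \<le> s * dist x y"
    and H2: "r \<ge> 0" "\<And>l1 l2 x. dist (\<tau> l1 x) (\<tau> l2 x) \<le> r * dist l1 l2"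
    and H3: "t \<ge> 0" "\<And>x y. dMK (q x) (q y) \<le> t * dist x y"
    and contr: "s + r * t < 1"
  shows "\<exists>\<mu>R. \<mu>R \<in> Prob \<and> Tq q \<tau> \<mu>R = \<mu>R \<and>
           (\<forall>\<nu> \<in> Prob. Tq q \<tau> \<nu> = \<nu> \<longrightarrow> \<nu> = \<mu>R) \<and>
           (\<forall>\<mu>0 \<in> Prob. \<exists>C \<rho>. 0 \<le> C \<and> 0 \<le> \<rho> \<and> \<rho> < 1 \<and>
              (\<forall>k. dMK ((Tq q \<tau> ^^ k) \<mu>0) \<mu>R \<le> C * \<rho> ^ k))"
proof -
  interpret S: setting \<tau> q s r t
    using X_compact L_compact tau_cont q_prob q_cont M1 H2 H3 contr by unfold_locales blast+
  obtain \<mu>R where \<mu>R: "\<mu>R \<in> Prob" "Tq q \<tau> \<mu>R = \<mu>R" using S.fixed_exists by blast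
  have fix_pow: "(Tq q \<tau> ^^ k) \<mu>R = \<mu>R" for k using \<mu>R(2) by (induction k) simp_all
  show ?thesis
  proof (intro exI[of _ \<mu>R] conjI ballI impI)
    show "\<mu>R \<in> Prob" "Tq q \<tau> \<mu>R = \<mu>R" by (rule \<mu>R(1), rule \<mu>R(2))
  next
    fix \<nu> assume \<nu>: "\<nu> \<in> Prob" and fx: "Tq q \<tau> \<nu> = \<nu>"
    have "dMK \<nu> \<mu>R \<le> S.c * dMK \<nu> \<mu>R" using S.T_contr[OF \<nu> \<mu>R(1)] fx \<mu>R(2) by simp
    then have "(1 - S.c) * dMK \<nu> \<mu>R \<le> 0" by (simp add: algebra_simps)
    then have "dMK \<nu> \<mu>R \<le> 0" using S.c_pos by (simp add: mult_le_0_iff)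
    then show "\<nu> = \<mu>R" by (rule S.dMK_zero_eq[OF \<nu> \<mu>R(1)])
  next
    fix \<mu>0 :: "'a measure" assume \<mu>0: "\<mu>0 \<in> Prob"
    show "\<exists>C \<rho>. 0 \<le> C \<and> 0 \<le> \<rho> \<and> \<rho> < 1 \<and> (\<forall>k. dMK ((Tq q \<tau> ^^ k) \<mu>0) \<mu>R \<le> C * \<rho> ^ k)"
    proof (rule exI[of _ "dMK \<mu>0 \<mu>R"], rule exI[of _ S.c], intro conjI allI)
      show "0 \<le> dMK \<mu>0 \<mu>R" by (rule dMK_nonneg[OF X_compact \<mu>0 \<mu>R(1)])
      show "0 \<le> S.c" using S.c_pos by auto
      show "S.c < 1" using S.c_pos by auto
      fix k
      have "dMK ((Tq q \<tau> ^^ k) \<mu>0) ((Tq q \<tau> ^^ k) \<mu>R) \<le> S.c ^ k * dMK \<mu>0 \<mu>R"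
        by (rule S.T_pow_contr[OF \<mu>0 \<mu>R(1)])
      then show "dMK ((Tq q \<tau> ^^ k) \<mu>0) \<mu>R \<le> dMK \<mu>0 \<mu>R * S.c ^ k"
        using fix_pow[of k] by (simp add: mult.commute)
    qed
  qed
qed

end
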